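(* Let $\mathcal{M}$ be a separable metric space, $f:\mathcal{M}\to\mathcal{M}$ continuous, and $\mathcal{X}\subseteq\mathcal{M}$ forward invariant under $f$ and path connected. Consider $x_{k+1}=f(x_k)$ on $\mathcal{X}$, with $\mathcal{W}$ its set of $\omega$-limit sets. Suppose: (T1') there exist a separable metric space $\mathcal{Z}$, a continuous map $g:\mathcal{Z}\to\mathcal{Z}$ such that $z_{k+1}=g(z_k)$ on $\mathcal{Z}$ has closed basins, and a continuous map $F:\mathcal{X}\to\mathcal{Z}$ with $F\circ f=g\circ F$ on $\mathcal{X}$; (T2') every trajectory of $x_{k+1}=f(x_k)$ on $\mathcal{X}$ is forward precompact in $\mathcal{X}$; (T3') $\mathcal{W}$ is countable. Then the set $\{F(\Omega)\mid\Omega\in\mathcal{W}\}$ has exactly one element.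
   Context: The forward orbit of $\xi$ is $\{f^k(\xi)\mid k\in\mathbb{N}\}$; the trajectory through $\xi$ is forward precompact in $\mathcal{X}$ if the closure in $\mathcal{X}$ of its forward orbit is compact. $\omega_{\mathcal{X}}(\xi)$ is the set of $x\in\mathcal{X}$ such that $f^{k_j}(\xi)\to x$ for some indices $k_j\to\infty$; $\mathcal{W}=\{\omega_{\mathcal{X}}(\xi)\mid\xi\in\mathcal{X}\}$. For the system $z_{k+1}=g(z_k)$ on $\mathcal{Z}$, $\omega_{\mathcal{Z}}$ and its set of $\omega$-limit sets are defined analogously, and the domain of attraction of an $\omega$-limit set $\Omega$ is $D^+_{\mathcal{Z}}(\Omega)=\{\zeta\in\mathcal{Z}\mid\omega_{\mathcal{Z}}(\zeta)=\Omega\}$; the system has closed basins if $D^+_{\mathcal{Z}}(\Omega)$ is closed for every $\omega$-limit set $\Omega$ of that system. *)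

theory Defs
  imports "HOL-Analysis.Analysis"
begin

definition forward_orbit :: "('a \<Rightarrow> 'a) \<Rightarrow> 'a \<Rightarrow> 'a set" where
  "forward_orbit f xi = {(f ^^ k) xi | k. True}"

definition omega_limit :: "'a set \<Rightarrow> ('a \<Rightarrow> 'a) \<Rightarrow> 'a::topological_space \<Rightarrow> 'a set" where
  "omega_limit S f xi = {x \<in> S. \<exists>k::nat \<Rightarrow> nat. filterlim k at_top sequentially \<and>
      ((\<lambda>j. (f ^^ k j) xi) \<longlongrightarrow> x) sequentially}"

definition omega_limit_sets :: "'a set \<Rightarrow> ('a \<Rightarrow> 'a) \<Rightarrow> 'a::topological_space set set" where
  "omega_limit_sets S f = {omega_limit S f xi | xi. xi \<in> S}"

text \<open>Trajectory through xi is forward precompact in S: the closure in S of its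
  forward orbit (i.e. S intersected with the closure) is compact.\<close>
definition forward_precompact :: "'a set \<Rightarrow> ('a \<Rightarrow> 'a) \<Rightarrow> 'a::topological_space \<Rightarrow> bool" where
  "forward_precompact S f xi \<longleftrightarrow> compact (S \<inter> closure (forward_orbit f xi))"

definition domain_attraction :: "'a set \<Rightarrow> ('a \<Rightarrow> 'a) \<Rightarrow> 'a set \<Rightarrow> 'a::topological_space set" where
  "domain_attraction S f Omega = {z \<in> S. omega_limit S f z = Omega}"

definition closed_basins :: "('a::topological_space \<Rightarrow> 'a) \<Rightarrow> bool" where
  "closed_basins g \<longleftrightarrow>
     (\<forall>Omega \<in> omega_limit_sets UNIV g. closed (domain_attraction UNIV g Omega))"

end

theory Submission imports Defs begin

lemma orbit_in:
  assumes "f ` X \<subseteq> X" "xi \<in> X" shows "(f ^^ k) xi \<in> X"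
  using assms by (induction k) auto

lemma conj_pow:
  assumes "f ` X \<subseteq> X" "xi \<in> X" "\<And>x. x \<in> X \<Longrightarrow> F (f x) = g (F x)"
  shows "F ((f ^^ k) xi) = (g ^^ k) (F xi)"
  using assms by (induction k) (auto simp: orbit_in)

lemma key:
  fixes f :: "'m::metric_space \<Rightarrow> 'm" and g :: "'z::metric_space \<Rightarrow> 'z"
  assumes X_inv: "f ` X \<subseteq> X"
    and F_cont: "continuous_on X F"
    and F_conj: "\<And>x. x \<in> X \<Longrightarrow> F (f x) = g (F x)"
    and T2: "forward_precompact X f xi" and xi: "xi \<in> X"
  shows "F ` omega_limit X f xi = omega_limit UNIV g (F xi)"
proof
  show "F ` omega_limit X f xi \<subseteq> omega_limit UNIV g (F xi)"
  proof
    fix z assume "z \<in> F ` omega_limit X f xi"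
    then obtain x k where x: "x \<in> X" "z = F x" "filterlim k at_top sequentially"
      "((\<lambda>j. (f ^^ k j) xi) \<longlongrightarrow> x) sequentially"
      unfolding omega_limit_def by auto
    have "((\<lambda>j. F ((f ^^ k j) xi)) \<longlongrightarrow> F x) sequentially"
      by (rule continuous_on_tendsto_compose[OF F_cont x(4) x(1)])
         (simp add: orbit_in[OF X_inv xi])
    hence "((\<lambda>j. (g ^^ k j) (F xi)) \<longlongrightarrow> z) sequentially"
      using conj_pow[where F=F and g=g, OF X_inv xi F_conj] x(2) by simp
    thus "z \<in> omega_limit UNIV g (F xi)"
      unfolding omega_limit_def using x(3) by auto
  qed
next
  show "omega_limit UNIV g (F xi) \<subseteq> F ` omega_limit X f xi"
  proof
    fix z assume "z \<in> omega_limit UNIV g (F xi)"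
    then obtain k where k: "filterlim k at_top sequentially"
      "((\<lambda>j. (g ^^ k j) (F xi)) \<longlongrightarrow> z) sequentially"
      unfolding omega_limit_def by auto
    define K where "K = X \<inter> closure (forward_orbit f xi)"
    have "seq_compact K" using T2 compact_imp_seq_compact
      unfolding forward_precompact_def K_def by blast
    moreover have "\<forall>j. (f ^^ k j) xi \<in> K"
    proof
      fix j
      have "(f ^^ k j) xi \<in> forward_orbit f xi" unfolding forward_orbit_def by blast
      hence "(f ^^ k j) xi \<in> closure (forward_orbit f xi)" using closure_subset by blast
      thus "(f ^^ k j) xi \<in> K" unfolding K_def using orbit_in[OF X_inv xi] by blast
    qed
    ultimately obtain x r where xr: "x \<in> K" "strict_mono r"
      "((\<lambda>j. (f ^^ k j) xi) \<circ> r) \<longlonglongrightarrow> x"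
      by (rule seq_compactE)
    have xX: "x \<in> X" using xr(1) K_def by auto
    have lim1: "((\<lambda>j. (f ^^ (k (r j))) xi) \<longlongrightarrow> x) sequentially"
      using xr(3) by (simp add: o_def)
    have kr: "filterlim (\<lambda>j. k (r j)) at_top sequentially"
      using filterlim_compose[OF k(1) filterlim_subseq[OF xr(2)]] .
    have "((\<lambda>j. F ((f ^^ (k (r j))) xi)) \<longlongrightarrow> F x) sequentially"
      by (rule continuous_on_tendsto_compose[OF F_cont lim1 xX])
         (simp add: orbit_in[OF X_inv xi])
    hence a: "((\<lambda>j. (g ^^ (k (r j))) (F xi)) \<longlongrightarrow> F x) sequentially"
      using conj_pow[where F=F and g=g, OF X_inv xi F_conj] by simp
    have b: "((\<lambda>j. (g ^^ (k (r j))) (F xi)) \<longlongrightarrow> z) sequentially"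
      using LIMSEQ_subseq_LIMSEQ[OF k(2) xr(2)] by (simp add: o_def)
    have "F x = z" using LIMSEQ_unique[OF a b] .
    moreover have "x \<in> omega_limit X f xi"
      unfolding omega_limit_def using xX kr lim1 by auto
    ultimately show "z \<in> F ` omega_limit X f xi" by blast
  qed
qed

theorem theorem20:
  fixes f :: "'m::metric_space \<Rightarrow> 'm"
    and X :: "'m set"
    and g :: "'z::metric_space \<Rightarrow> 'z"
    and F :: "'m \<Rightarrow> 'z"
  assumes sepM: "separable_space (euclidean :: 'm topology)"
    and f_cont: "continuous_on UNIV f"
    and X_inv: "f ` X \<subseteq> X"
    and X_pc: "path_connected X"
    and X_ne: "X \<noteq> {}"
    and sepZ: "separable_space (euclidean :: 'z topology)"
    and g_cont: "continuous_on UNIV g"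
    and g_basins: "closed_basins g"
    and F_cont: "continuous_on X F"
    and F_conj: "\<And>x. x \<in> X \<Longrightarrow> F (f x) = g (F x)"
    and T2: "\<And>xi. xi \<in> X \<Longrightarrow> forward_precompact X f xi"
    and T3: "countable (omega_limit_sets X f)"
  shows "\<exists>!S. S \<in> {F ` Omega | Omega. Omega \<in> omega_limit_sets X f}"
proof -
  define om where "om = omega_limit X f"
  have K: "\<And>xi. xi \<in> X \<Longrightarrow> F ` om xi = omega_limit UNIV g (F xi)"
    unfolding om_def by (rule key[OF X_inv F_cont F_conj T2])
  have same: "F ` om x1 = F ` om x2" if x1: "x1 \<in> X" and x2: "x2 \<in> X" for x1 x2
  proof -
    obtain p where p: "path p" "path_image p \<subseteq> X" "pathstart p = x1" "pathfinish p = x2"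
      using X_pc x1 x2 unfolding path_connected_def by blast
    have pX: "t \<in> {0..1} \<Longrightarrow> p t \<in> X" for t
      using p(2) unfolding path_image_def by auto
    define SS where "SS = (\<lambda>Omega. F ` Omega) ` omega_limit_sets X f"
    define C where "C S = {t \<in> {0..1::real}. F ` om (p t) = S}" for S
    define U where "U = C ` {S \<in> SS. C S \<noteq> {}}"
    have cU: "countable U" unfolding U_def SS_def using T3 by auto
    have pw: "pairwise disjnt U"
    proof (unfold pairwise_def, intro ballI impI)
      fix A B assume "A \<in> U" "B \<in> U" "A \<noteq> B"
      then obtain S S' where "A = C S" "B = C S'" unfolding U_def by auto
      with \<open>A \<noteq> B\<close> have "S \<noteq> S'" by auto
      thus "disjnt A B" using \<open>A = C S\<close> \<open>B = C S'\<close> unfolding disjnt_def C_def by auto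
    qed
    have clo: "closed A \<and> A \<noteq> {}" if "A \<in> U" for A
    proof -
      obtain S where S: "S \<in> SS" "A = C S" "C S \<noteq> {}" using \<open>A \<in> U\<close> U_def by auto
      obtain xi where xi: "xi \<in> X" "S = F ` om xi"
        using S(1) unfolding SS_def omega_limit_sets_def om_def by auto
      have "S \<in> omega_limit_sets UNIV g"
        using K[OF xi(1)] xi(2) unfolding omega_limit_sets_def by auto
      hence cD: "closed (domain_attraction UNIV g S)"
        using g_basins unfolding closed_basins_def by blast
      have "C S = {0..1} \<inter> (F \<circ> p) -` domain_attraction UNIV g S"
      proof -
        have eq: "(F ` om (p t) = S) = (F (p t) \<in> domain_attraction UNIV g S)" if "t \<in> {0..1}" for t
          using K[OF pX[OF that]] by (simp add: domain_attraction_def)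
        show ?thesis
        proof (rule set_eqI)
          fix t
          show "t \<in> C S \<longleftrightarrow> t \<in> {0..1} \<inter> (F \<circ> p) -` domain_attraction UNIV g S"
            unfolding C_def mem_Collect_eq Int_iff vimage_def o_def using eq[of t] by blast
        qed
      qed
      moreover have pc: "continuous_on {0..1} (F \<circ> p)"
        using p(1) p(2) unfolding path_def path_image_def
        by (intro continuous_on_compose continuous_on_subset[OF F_cont]) auto
      ultimately have "closed (C S)"
        using continuous_closed_preimage[OF pc closed_atLeastAtMost cD] by simp
      thus ?thesis using S by auto
    qed
    have cov: "\<Union>U = {0..1}"
    proof
      show "\<Union>U \<subseteq> {0..1}" unfolding U_def C_def by auto
      show "{0..1} \<subseteq> \<Union>U"
      proof
        fix t :: real assume t: "t \<in> {0..1}"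
        have "F ` om (p t) \<in> SS"
          unfolding SS_def omega_limit_sets_def om_def using pX[OF t] by auto
        moreover have "t \<in> C (F ` om (p t))" unfolding C_def using t by auto
        ultimately show "t \<in> \<Union>U" unfolding U_def by blast
      qed
    qed
    have "U = {{0..1}}"
      by (rule real_Sierpinski_lemma[OF _ cU pw clo cov]) auto
    have in1: "C (F ` om x1) \<in> U" and in2: "C (F ` om x2) \<in> U"
    proof -
      have "0 \<in> C (F ` om x1)" using p(3) unfolding C_def pathstart_def by auto
      moreover have "F ` om x1 \<in> SS"
        unfolding SS_def omega_limit_sets_def om_def using x1 by auto
      ultimately show "C (F ` om x1) \<in> U" unfolding U_def by blast
      have "1 \<in> C (F ` om x2)" using p(4) unfolding C_def pathfinish_def by auto
      moreover have "F ` om x2 \<in> SS"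
        unfolding SS_def omega_limit_sets_def om_def using x2 by auto
      ultimately show "C (F ` om x2) \<in> U" unfolding U_def by blast
    qed
    hence "0 \<in> C (F ` om x2)" using \<open>U = {{0..1}}\<close> by auto
    thus ?thesis using p(3) unfolding C_def pathstart_def by auto
  qed
  obtain x0 where x0: "x0 \<in> X" using X_ne by auto
  show ?thesis
  proof (rule ex1I[where a = "F ` om x0"])
    show "F ` om x0 \<in> {F ` Omega | Omega. Omega \<in> omega_limit_sets X f}"
      unfolding omega_limit_sets_def om_def using x0 by auto
    fix S assume "S \<in> {F ` Omega | Omega. Omega \<in> omega_limit_sets X f}"
    then obtain xi where "xi \<in> X" "S = F ` om xi"
      unfolding omega_limit_sets_def om_def by auto
    thus "S = F ` om x0" using same[OF _ x0] by simp
  qed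
qed

end
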